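(* Let $X$ be a finite set, let $\emptyset \neq A \subseteq B \subseteq 2^X$, and let $X_p$ be a random subset of $X$ with distribution $\mu_p$. Let $K$ be a constant such that for every finite set $Y$ and every nontrivial upper set $\mathcal{F}\subseteq 2^Y$ one has $p_c(\mathcal{F}) \le K\, q(\mathcal{F}) \log \ell(\mathcal{F})$ (such a universal constant exists by the Park-Pham theorem). Then for $p\in(0,1)$, $$\mathbb{P}\big(X_p \in A \mid X_p \in B\big) > \tfrac{1}{2}\, r_{A,B}(p)$$ whenever $p > K\, q(\langle A \rangle)\log \ell(\langle A \rangle)$.
   Context: For $p\in[0,1]$, $\mu_p$ is the product measure on $2^X$: $\mu_p(S)=p^{|S|}(1-p)^{|X|-|S|}$ for $S\subseteq X$, extended to families by $\mu_p(\mathcal{F})=\sum_{S\in\mathcal{F}}\mu_p(S)$. A property $\mathcal{F}\subseteq 2^X$ is an upper set if $S\in\mathcal{F}$, $S\subseteq T$ imply $T\in\mathcal{F}$, and nontrivial if $\mathcal{F}\ne\emptyset,2^X$. The critical probability $p_c(\mathcal{F})$ of a nontrivial upper set is the unique $p$ with $\mu_p(\mathcal{F})=\frac12$. For $\mathcal{A}\subseteq 2^X$, $\langle \mathcal{A}\rangle=\{T\subseteq X: S\subseteq T\text{ for some }S\in\mathcal{A}\}$. A family $\mathcal{G}$ covers an upper set $\mathcal{F}$ if $\mathcal{F}\subseteq\bigcup_{S\in\mathcal{G}}\langle\{S\}\rangle$; $\mathcal{F}$ is $p$-small if some cover $\mathcal{G}$ has $\sum_{S\in\mathcal{G}}p^{|S|}\le\frac12$;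 $q(\mathcal{F})$ is the largest $p$ for which $\mathcal{F}$ is $p$-small. With $\mathcal{F}_0$ the set of inclusion-minimal elements of $\mathcal{F}$, $\ell_0(\mathcal{F})=\max\{|S|:S\in\mathcal{F}_0\}$ and $\ell(\mathcal{F})=\max\{\ell_0(\mathcal{F}),2\}$. For $\emptyset\ne A\subseteq B\subseteq 2^X$, $r_{A,B}(p)=\dfrac{\mathbb{P}(X_p\in A\mid X_p\in\langle A\rangle)}{\mathbb{P}(X_p\in B)}$. *)

theory Defs
  imports Complex_Main
begin

definition mu :: "'a set \<Rightarrow> real \<Rightarrow> 'a set set \<Rightarrow> real" where
  "mu X p F = (\<Sum>S\<in>F. p ^ card S * (1 - p) ^ (card X - card S))"

definition upper_set :: "'a set \<Rightarrow> 'a set set \<Rightarrow> bool" where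
  "upper_set X F \<longleftrightarrow> F \<subseteq> Pow X \<and> (\<forall>S\<in>F. \<forall>T. S \<subseteq> T \<and> T \<subseteq> X \<longrightarrow> T \<in> F)"

definition nontrivial :: "'a set \<Rightarrow> 'a set set \<Rightarrow> bool" where
  "nontrivial X F \<longleftrightarrow> F \<noteq> {} \<and> F \<noteq> Pow X"

definition p_c :: "'a set \<Rightarrow> 'a set set \<Rightarrow> real" where
  "p_c X F = (THE p. 0 \<le> p \<and> p \<le> 1 \<and> mu X p F = 1/2)"

definition up :: "'a set \<Rightarrow> 'a set set \<Rightarrow> 'a set set" where
  "up X A = {T. T \<subseteq> X \<and> (\<exists>S\<in>A. S \<subseteq> T)}"

definition covers :: "'a set \<Rightarrow> 'a set set \<Rightarrow> 'a set set \<Rightarrow> bool" where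
  "covers X G F \<longleftrightarrow> F \<subseteq> (\<Union>S\<in>G. up X {S})"

definition p_small :: "'a set \<Rightarrow> 'a set set \<Rightarrow> real \<Rightarrow> bool" where
  "p_small X F p \<longleftrightarrow> (\<exists>G. G \<subseteq> Pow X \<and> covers X G F \<and> (\<Sum>S\<in>G. p ^ card S) \<le> 1/2)"

definition q :: "'a set \<Rightarrow> 'a set set \<Rightarrow> real" where
  "q X F = (GREATEST p. 0 \<le> p \<and> p \<le> 1 \<and> p_small X F p)"

definition minimal_elems :: "'a set set \<Rightarrow> 'a set set" where
  "minimal_elems F = {S\<in>F. \<forall>T\<in>F. T \<subseteq> S \<longrightarrow> T = S}"

definition ell0 :: "'a set set \<Rightarrow> nat" where
  "ell0 F = Max (card ` minimal_elems F)"

definition ell :: "'a set set \<Rightarrow> nat" where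
  "ell F = max (ell0 F) 2"

definition cond_prob :: "'a set \<Rightarrow> real \<Rightarrow> 'a set set \<Rightarrow> 'a set set \<Rightarrow> real" where
  "cond_prob X p A B = mu X p (A \<inter> B) / mu X p B"

definition r_AB :: "'a set \<Rightarrow> 'a set set \<Rightarrow> 'a set set \<Rightarrow> real \<Rightarrow> real" where
  "r_AB X A B p = cond_prob X p A (up X A) / mu X p B"

end

theory Submission imports Defs begin

lemma mu_insert:
  assumes "finite X" "x \<notin> X" "F \<subseteq> Pow (insert x X)"
  shows "mu (insert x X) p F = (1-p) * mu X p {S\<in>F. x\<notin>S} + p * mu X p {T. T \<subseteq> X \<and> insert x T \<in> F}"
proof -
  let ?F0 = "{S\<in>F. x\<notin>S}" and ?F1 = "{T. T \<subseteq> X \<and> insert x T \<in> F}"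
  have fin: "finite F" using assms finite_subset by (metis finite_Pow_iff finite_insert)
  have split: "F = ?F0 \<union> insert x ` ?F1"
  proof (rule set_eqI, rule iffI)
    fix S assume S: "S \<in> F"
    show "S \<in> ?F0 \<union> insert x ` ?F1"
    proof (cases "x \<in> S")
      case True
      then have "S = insert x (S - {x})" by auto
      moreover have "S - {x} \<subseteq> X" using S assms(3) by auto
      ultimately show ?thesis using S by (metis (mono_tags, lifting) UnI2 image_eqI mem_Collect_eq)
    qed (use S in auto)
  qed auto
  have disj: "?F0 \<inter> insert x ` ?F1 = {}" by auto
  have inj: "inj_on (insert x) ?F1"
    by (rule inj_onI) (use assms(2) in \<open>auto simp: insert_ident\<close>)
  have cX: "card (insert x X) = Suc (card X)" using assms by simp
  have s0: "(\<Sum>S\<in>?F0. p ^ card S * (1 - p) ^ (card (insert x X) - card S)) = (1-p) * mu X p ?F0"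
    unfolding mu_def sum_distrib_left
  proof (rule sum.cong[OF refl])
    fix S assume S: "S \<in> ?F0"
    then have "S \<subseteq> X" using assms(3) by auto
    then have "card S \<le> card X" using assms(1) card_mono by blast
    then have "card (insert x X) - card S = Suc (card X - card S)" using cX by simp
    then show "p ^ card S * (1 - p) ^ (card (insert x X) - card S) = (1-p) * (p ^ card S * (1 - p) ^ (card X - card S))"
      by simp
  qed
  have s1: "(\<Sum>S\<in>insert x ` ?F1. p ^ card S * (1 - p) ^ (card (insert x X) - card S)) = p * mu X p ?F1"
    unfolding mu_def sum_distrib_left sum.reindex[OF inj] o_def
  proof (rule sum.cong[OF refl])
    fix T assume T: "T \<in> ?F1"
    then have "x \<notin> T" "finite T" using assms(2) assms(1) finite_subset by auto
    then have "card (insert x T) = Suc (card T)" by simp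
    then show "p ^ card (insert x T) * (1 - p) ^ (card (insert x X) - card (insert x T)) = p * (p ^ card T * (1 - p) ^ (card X - card T))"
      using cX by simp
  qed
  have "mu (insert x X) p F = (\<Sum>S\<in>?F0. p ^ card S * (1 - p) ^ (card (insert x X) - card S)) + (\<Sum>S\<in>insert x ` ?F1. p ^ card S * (1 - p) ^ (card (insert x X) - card S))"
    unfolding mu_def
    by (subst split, rule sum.union_disjoint) (use fin split disj in \<open>auto intro: finite_subset\<close>)
  then show ?thesis using s0 s1 by simp
qed

lemma mu_nonneg: "0 \<le> p \<Longrightarrow> p \<le> 1 \<Longrightarrow> 0 \<le> mu X p G"
  unfolding mu_def by (intro sum_nonneg) auto

lemma mu_subset: assumes "finite X" "G \<subseteq> H" "H \<subseteq> Pow X" "0 \<le> p" "p \<le> 1"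
  shows "mu X p G \<le> mu X p H"
  unfolding mu_def
  by (rule sum_mono2) (use assms in \<open>auto intro: finite_subset\<close>)

lemma mu_pos_upper: assumes "finite X" "upper_set X G" "G \<noteq> {}" "0 < p" "p \<le> 1"
  shows "0 < mu X p G"
proof -
  have XG: "X \<in> G" using assms(2,3) unfolding upper_set_def by blast
  have fin: "finite G" using assms(1,2) unfolding upper_set_def by (meson finite_Pow_iff finite_subset)
  have "p ^ card X * (1 - p) ^ (card X - card X) \<le> mu X p G"
    unfolding mu_def
    by (rule member_le_sum[where f="\<lambda>S. p ^ card S * (1 - p) ^ (card X - card S)", OF XG _ fin])
       (use assms in auto)
  moreover have "0 < p ^ card X * (1 - p) ^ (card X - card X)" using assms by simp
  ultimately show ?thesis by linarith
qed

lemma mu_Pow: assumes "finite X" shows "mu X p (Pow X) = 1"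
  using assms
proof (induction X rule: finite_induct)
  case empty
  then show ?case by (simp add: mu_def)
next
  case (insert x X)
  have a: "{S \<in> Pow (insert x X). x \<notin> S} = Pow X" using insert.hyps by auto
  have b: "{T. T \<subseteq> X \<and> insert x T \<in> Pow (insert x X)} = Pow X" by auto
  have "mu (insert x X) p (Pow (insert x X)) = (1-p) * mu X p {S \<in> Pow (insert x X). x \<notin> S} + p * mu X p {T. T \<subseteq> X \<and> insert x T \<in> Pow (insert x X)}"
    by (rule mu_insert) (use insert.hyps in auto)
  then show ?case unfolding a b using insert.IH by (simp add: algebra_simps)
qed

lemma mu_mono_strict:
  assumes "finite X"
  shows "upper_set X F \<Longrightarrow> 0 \<le> p \<Longrightarrow> p < p' \<Longrightarrow> p' \<le> 1 \<Longrightarrow>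
    mu X p F \<le> mu X p' F \<and> (nontrivial X F \<longrightarrow> mu X p F < mu X p' F)"
  using assms
proof (induction X arbitrary: F rule: finite_induct)
  case empty
  then have "F = {} \<or> F = {{}}" unfolding upper_set_def by auto
  then show ?case unfolding nontrivial_def by (auto simp: mu_def)
next
  case (insert x X)
  let ?F0 = "{S\<in>F. x\<notin>S}" and ?F1 = "{T. T \<subseteq> X \<and> insert x T \<in> F}"
  have FP: "F \<subseteq> Pow (insert x X)" using insert.prems unfolding upper_set_def by auto
  have U: "\<And>S T. S \<in> F \<Longrightarrow> S \<subseteq> T \<Longrightarrow> T \<subseteq> insert x X \<Longrightarrow> T \<in> F"
    using insert.prems(1) unfolding upper_set_def by blast
  have up0: "upper_set X ?F0" unfolding upper_set_def
  proof (intro conjI ballI allI impI subsetI)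
    fix S assume "S \<in> ?F0" then show "S \<in> Pow X" using FP by auto
  next
    fix S T assume "S \<in> ?F0" "S \<subseteq> T \<and> T \<subseteq> X"
    then show "T \<in> ?F0" using U[of S T] insert.hyps(2) by auto
  qed
  have up1: "upper_set X ?F1" unfolding upper_set_def
  proof (intro conjI ballI allI impI subsetI)
    fix S assume "S \<in> ?F1" then show "S \<in> Pow X" by auto
  next
    fix S T assume "S \<in> ?F1" "S \<subseteq> T \<and> T \<subseteq> X"
    then show "T \<in> ?F1" using U[of "insert x S" "insert x T"] by auto
  qed
  have sub: "?F0 \<subseteq> ?F1"
  proof
    fix S assume S: "S \<in> ?F0"
    then have "S \<subseteq> X" using FP by auto
    moreover have "insert x S \<in> F" using S insert.prems(1) \<open>S \<subseteq> X\<close> unfolding upper_set_def by blast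
    ultimately show "S \<in> ?F1" by simp
  qed
  define a where "a = (\<lambda>t. mu X t ?F0)"
  define b where "b = (\<lambda>t. mu X t ?F1)"
  have eq: "mu (insert x X) t F = (1-t) * a t + t * b t" for t
    unfolding a_def b_def by (rule mu_insert[OF insert(1,2) FP])
  have IH0: "a p \<le> a p' \<and> (nontrivial X ?F0 \<longrightarrow> a p < a p')"
    unfolding a_def using insert.IH[OF up0] insert.prems by blast
  have IH1: "b p \<le> b p' \<and> (nontrivial X ?F1 \<longrightarrow> b p < b p')"
    unfolding b_def using insert.IH[OF up1] insert.prems by blast
  have F1P: "?F1 \<subseteq> Pow X" by auto
  have ab: "a p' \<le> b p'" unfolding a_def b_def
    by (rule mu_subset[OF insert(1) sub F1P]) (use insert.prems in auto)
  have a0: "0 \<le> a p" unfolding a_def by (rule mu_nonneg) (use insert.prems in auto)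
  have b0: "0 \<le> b p" unfolding b_def by (rule mu_nonneg) (use insert.prems in auto)
  have p0: "0 \<le> p" "p < 1" "0 < p'" using insert.prems by auto
  have step1: "(1-p) * a p + p * b p \<le> (1-p) * a p' + p * b p'"
    using IH0 IH1 p0 by (intro add_mono mult_left_mono) auto
  have step2: "(1-p) * a p' + p * b p' \<le> (1-p') * a p' + p' * b p'"
  proof -
    have "(1-p') * a p' + p' * b p' - ((1-p) * a p' + p * b p') = (p' - p) * (b p' - a p')"
      by (simp add: algebra_simps)
    moreover have "0 \<le> (p' - p) * (b p' - a p')" using ab insert.prems by simp
    ultimately show ?thesis by linarith
  qed
  have strict: "mu (insert x X) p F < mu (insert x X) p' F" if nt: "nontrivial (insert x X) F"
  proof (cases "nontrivial X ?F0")
    case True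
    then have "a p < a p'" using IH0 by blast
    then have "(1-p) * a p + p * b p < (1-p) * a p' + p * b p'"
      using IH1 p0 by (intro add_less_le_mono mult_left_mono mult_strict_left_mono) auto
    then show ?thesis using step2 eq by simp
  next
    case False
    then have "?F0 = {} \<or> ?F0 = Pow X" unfolding nontrivial_def by blast
    then show ?thesis
    proof
      assume e: "?F0 = {}"
      have "?F1 \<noteq> {}"
      proof -
        obtain S where S: "S \<in> F" using nt unfolding nontrivial_def by blast
        then have "x \<in> S" using e by auto
        then have "S - {x} \<in> ?F1" using S FP by (auto simp: insert_absorb)
        then show ?thesis by blast
      qed
      then have bp: "0 < b p'" unfolding b_def
        by (intro mu_pos_upper[OF insert(1) up1]) (use insert.prems in auto)
      have a00: "a t = 0" for t unfolding a_def e by (simp add: mu_def)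
      have "p * b p \<le> p * b p'" using IH1 p0 by (intro mult_left_mono) auto
      also have "\<dots> < p' * b p'" using bp insert.prems by simp
      finally show ?thesis using eq a00 by simp
    next
      assume e: "?F0 = Pow X"
      then have e1: "?F1 = Pow X" using sub F1P by blast
      have "F = Pow (insert x X)"
      proof (rule antisym[OF FP], rule subsetI)
        fix S assume S: "S \<in> Pow (insert x X)"
        show "S \<in> F"
        proof (cases "x \<in> S")
          case True
          then have "S - {x} \<in> ?F1" using e1 S by auto
          then show ?thesis using True by (simp add: insert_absorb)
        next
          case False
          then have "S \<in> ?F0" using e S by auto
          then show ?thesis by simp
        qed
      qed
      then show ?thesis using nt unfolding nontrivial_def by simp
    qed
  qed
  show ?case using step1 step2 eq strict by auto
qed


lemma mu_pos: assumes "finite X" "G \<subseteq> Pow X" "G \<noteq> {}" "0 < p" "p < 1"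
  shows "0 < mu X p G"
  unfolding mu_def
  by (rule sum_pos) (use assms in \<open>auto intro: finite_subset\<close>)

lemma mu_half:
  assumes fin: "finite X" and up: "upper_set X U" and nt: "nontrivial X U"
    and pc: "p_c X U < p" and p1: "p \<le> 1"
  shows "mu X p U > 1/2"
proof -
  have UP: "U \<subseteq> Pow X" using up unfolding upper_set_def by auto
  have XU: "X \<in> U" using up nt unfolding upper_set_def nontrivial_def by blast
  have eU: "{} \<notin> U"
  proof
    assume "{} \<in> U"
    then have "U = Pow X" using up unfolding upper_set_def by blast
    then show False using nt unfolding nontrivial_def by simp
  qed
  have m0: "mu X 0 U = 0"
    unfolding mu_def
  proof (rule sum.neutral, rule ballI)
    fix S assume S: "S \<in> U"
    then have "S \<noteq> {}" "finite S" using eU UP fin by (auto intro: finite_subset)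
    then have "card S > 0" by (simp add: card_gt_0_iff)
    then show "0 ^ card S * (1 - 0) ^ (card X - card S) = (0::real)" by simp
  qed
  have "mu X 1 {X} \<le> mu X 1 U" by (rule mu_subset) (use fin XU UP in auto)
  then have m1: "1 \<le> mu X 1 U" by (simp add: mu_def)
  have cont: "continuous_on {0..1} (\<lambda>t. mu X t U)"
    unfolding mu_def by (intro continuous_intros)
  obtain c where c: "0 \<le> c" "c \<le> 1" "mu X c U = 1/2"
    using IVT'[of "\<lambda>t. mu X t U" 0 "1/2" 1] m0 m1 cont by auto
  have "p_c X U = c"
    unfolding p_c_def
  proof (rule the_equality)
    show "0 \<le> c \<and> c \<le> 1 \<and> mu X c U = 1/2" using c by simp
  next
    fix y assume y: "0 \<le> y \<and> y \<le> 1 \<and> mu X y U = 1/2"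
    show "y = c"
    proof (rule ccontr)
      assume "y \<noteq> c"
      then have "y < c \<or> c < y" by linarith
      then show False
      proof
        assume "y < c"
        then have "mu X y U < mu X c U" using mu_mono_strict[OF fin up] y c nt by blast
        then show False using y c by simp
      next
        assume "c < y"
        then have "mu X c U < mu X y U" using mu_mono_strict[OF fin up] y c nt by blast
        then show False using y c by simp
      qed
    qed
  qed
  then have "mu X c U < mu X p U" using mu_mono_strict[OF fin up] c pc p1 nt by simp
  then show ?thesis using c by simp
qed

theorem lemma3p5:
  fixes X :: "'a set" and A B :: "'a set set" and K p :: real
  assumes "finite X"
    and "A \<noteq> {}" and "A \<subseteq> B" and "B \<subseteq> Pow X"
    and K: "\<forall>Y :: 'a set. \<forall>F. finite Y \<and> upper_set Y F \<and> nontrivial Y F \<longrightarrow>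
              p_c Y F \<le> K * q Y F * ln (real (ell F))"
    and "0 < p" and "p < 1"
    and "p > K * q X (up X A) * ln (real (ell (up X A)))"
  shows "cond_prob X p A B > 1/2 * r_AB X A B p"
proof -
  let ?U = "up X A"
  have upU: "upper_set X ?U" unfolding upper_set_def up_def by auto
  have AU: "A \<subseteq> ?U" using assms(3,4) unfolding up_def by auto
  have mU: "mu X p ?U > 1/2"
  proof (cases "?U = Pow X")
    case True
    then show ?thesis using mu_Pow[OF assms(1)] by simp
  next
    case False
    then have nt: "nontrivial X ?U" using AU assms(2) unfolding nontrivial_def by blast
    then have "p_c X ?U < p" using K assms(1,8) upU by fastforce
    then show ?thesis using mu_half[OF assms(1) upU nt] assms(7) by simp
  qed
  have mA: "mu X p A > 0" by (rule mu_pos) (use assms in auto)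
  have mB: "mu X p B > 0" by (rule mu_pos) (use assms in auto)
  have e1: "cond_prob X p A B = mu X p A / mu X p B"
    unfolding cond_prob_def using assms(3) by (simp add: Int_absorb2)
  have e2: "r_AB X A B p = mu X p A / mu X p ?U / mu X p B"
    unfolding r_AB_def cond_prob_def using AU by (simp add: Int_absorb2)
  define a where "a = mu X p A / mu X p B"
  have a0: "a > 0" unfolding a_def using mA mB by simp
  have "1/2 * r_AB X A B p = a * (1 / (2 * mu X p ?U))" unfolding e2 a_def by simp
  also have "\<dots> < a * 1"
    using mU a0 by (intro mult_strict_left_mono) (auto simp: divide_simps)
  finally show ?thesis using e1 a_def by simp
qed

end
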